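(* If $A_0\in G$ fixes $Q$, then $A_0$ leaves invariant the subgroup $H_Q\le H_\Gamma$ generated by the images of the elements of $\mathrm{supp}\,Q$.
   Context: $\Gamma$ is a finite simplicial graph with vertex set $X$, $|X|=2g$, $A_\Gamma$ its right-angled Artin group, $H_\Gamma$ its abelianization, $L=X\cup X^{-1}$, $\bar u\in X$ the vertex of $u\in L$; $\mathrm{lk}(v)$ = neighbours, $\mathrm{st}(v)=\mathrm{lk}(v)\cup\{v\}$; domination $v\ge w$ iff $\mathrm{lk}(w)\subset\mathrm{st}(v)$. Fix a bijection $u\mapsto u^*$ of $L$ with $(u^* )^*=u^{-1}$ and letters $a_1,\dots,a_g\in L$ whose vertices together with those of $a_1^*,\dots,a_g^*$ are all of $X$; $Q=\sum\{[a_i]\wedge[a_i^*]: \bar a_i^*\text{ adjacent to }\bar a_i\}\in\Lambda^2H_\Gamma$, assumed nonzero, with $\mathrm{Aut}\,H_\Gamma$ acting diagonally on $\Lambda^2 H_\Gamma$. $\mathrm{supp}\,Q$ is the set of vertices appearing in $Q$. For $a\in X$, $b\in\mathrm{supp}\,Q$ with $a\ge b$, $a\ne b$, $E_{a,b}\in\mathrm{Aut}\,H_\Gamma$ sends $[b]\mapsto[b]+[a]$ and fixes $[x]$ for $x\ne b$; $N_b$ sends $[b]\mapsto-[b]$ and fixes the other basis elements. $G$ is the subgroup of $\mathrm{Aut}\,H_\Gamma$ generated by these $E_{a,b}$ and the $N_b$, $b\in\mathrm{supp}\,Q$. *)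

theory Defs
  imports "HOL-Analysis.Analysis"
begin

text \<open>Vertices: a finite type 'v, so X = UNIV. The graph is a symmetric irreflexive
relation E. H_Gamma = int^'v (free abelian group with basis the vertices, basis vector
of x is axis x 1). Letters L = X \<union> X^-1 are pairs (x, s): s = True means x, s = False
means x^-1. Endomorphisms of H_Gamma are integer matrices acting by *v; the column
of x is the image of [x]. Lambda^2 H_Gamma is modelled by antisymmetric integer
matrices, with u \<and> v = u v^T - v u^T, and Aut H_Gamma acts diagonally via
A \<cdot> M = A M A^T.\<close>

definition lk :: "('v \<Rightarrow> 'v \<Rightarrow> bool) \<Rightarrow> 'v \<Rightarrow> 'v set" where
  "lk E v = {w. E v w}"

definition st :: "('v \<Rightarrow> 'v \<Rightarrow> bool) \<Rightarrow> 'v \<Rightarrow> 'v set" where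
  "st E v = insert v (lk E v)"

definition dominates :: "('v \<Rightarrow> 'v \<Rightarrow> bool) \<Rightarrow> 'v \<Rightarrow> 'v \<Rightarrow> bool" where
  "dominates E v w \<longleftrightarrow> lk E w \<subseteq> st E v"

definition letter_inv :: "'v \<times> bool \<Rightarrow> 'v \<times> bool" where
  "letter_inv u = (fst u, \<not> snd u)"

definition cls :: "'v \<times> bool \<Rightarrow> int ^ 'v::finite" where
  "cls u = (if snd u then axis (fst u) 1 else - axis (fst u) 1)"

definition wedge :: "int ^ 'v::finite \<Rightarrow> int ^ 'v \<Rightarrow> int ^ 'v ^ 'v" where
  "wedge u v = (\<chi> x y. u $ x * v $ y - u $ y * v $ x)"

text \<open>Q = sum over i < g with bar(a_i^*) adjacent to bar(a_i) of [a_i] \<and> [a_i^*]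
(the letters a_1..a_g are indexed by 0..g-1)\<close>
definition Qform :: "('v::finite \<Rightarrow> 'v \<Rightarrow> bool) \<Rightarrow> ('v \<times> bool \<Rightarrow> 'v \<times> bool)
    \<Rightarrow> (nat \<Rightarrow> 'v \<times> bool) \<Rightarrow> nat \<Rightarrow> int ^ 'v ^ 'v" where
  "Qform E star a g =
     (\<Sum>i\<in>{i. i < g \<and> E (fst (star (a i))) (fst (a i))}. wedge (cls (a i)) (cls (star (a i))))"

definition act2 :: "int ^ 'v ^ 'v \<Rightarrow> int ^ 'v ^ 'v \<Rightarrow> int ^ 'v::finite ^ 'v" where
  "act2 A M = A ** M ** transpose A"

definition supp2 :: "int ^ 'v ^ 'v \<Rightarrow> 'v::finite set" where
  "supp2 M = {x. \<exists>y. M $ x $ y \<noteq> 0}"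

definition elemE :: "'v \<Rightarrow> 'v \<Rightarrow> int ^ 'v ^ 'v::finite" where
  "elemE a b = (\<chi> x y. (if x = y then 1 else 0) + (if x = a \<and> y = b then 1 else 0))"

definition elemE_inv :: "'v \<Rightarrow> 'v \<Rightarrow> int ^ 'v ^ 'v::finite" where
  "elemE_inv a b = (\<chi> x y. (if x = y then 1 else 0) - (if x = a \<and> y = b then 1 else 0))"

definition negN :: "'v \<Rightarrow> int ^ 'v ^ 'v::finite" where
  "negN b = (\<chi> x y. if x = y then (if x = b then -1 else 1) else 0)"

inductive_set genG :: "('v::finite \<Rightarrow> 'v \<Rightarrow> bool) \<Rightarrow> 'v set \<Rightarrow> (int ^ 'v ^ 'v) set"
  for E S where
  one: "mat 1 \<in> genG E S"
| E: "\<lbrakk>A \<in> genG E S; b \<in> S; dominates E a b; a \<noteq> b\<rbrakk> \<Longrightarrow> elemE a b ** A \<in> genG E S"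
| Einv: "\<lbrakk>A \<in> genG E S; b \<in> S; dominates E a b; a \<noteq> b\<rbrakk> \<Longrightarrow> elemE_inv a b ** A \<in> genG E S"
| N: "\<lbrakk>A \<in> genG E S; b \<in> S\<rbrakk> \<Longrightarrow> negN b ** A \<in> genG E S"

inductive_set zspan :: "'v set \<Rightarrow> (int ^ 'v::finite) set" for S where
  zero: "0 \<in> zspan S"
| gen: "b \<in> S \<Longrightarrow> axis b 1 \<in> zspan S"
| add: "\<lbrakk>u \<in> zspan S; v \<in> zspan S\<rbrakk> \<Longrightarrow> u + v \<in> zspan S"
| neg: "u \<in> zspan S \<Longrightarrow> - u \<in> zspan S"

end

theory Submission
  imports Defs
begin


lemma axis_comp: "axis k (x::int) $ i = (if i = k then x else 0)"
  by (simp add: axis_def)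

lemma mv_axis: "((M::int^'v::finite^'v) *v axis y k) $ x = M$x$y * k"
  by (simp add: matrix_vector_mult_def axis_comp if_distrib if_distribR sum.delta' cong: if_cong)

definition sg :: "'v \<times> bool \<Rightarrow> int" where "sg u = (if snd u then 1 else -1)"

lemma cls_comp: "cls u $ x = (if fst u = x then sg u else 0)"
  by (auto simp: cls_def sg_def axis_comp)

lemma term_aux: "(if p = x then s1 else 0) * (if q = y then s2 else 0) - (if p = y then s1 else 0) * (if q = x then s2 else (0::int))
   = s1 * s2 * ((if p = x \<and> q = y then 1 else 0) - (if p = y \<and> q = x then 1 else 0))"
  by (cases "p = x"; cases "q = y"; cases "p = y"; cases "q = x"; simp)

lemma Q_entry: "Qform E star a g $ x $ y =
  (\<Sum>i\<in>{i. i < g \<and> E (fst (star (a i))) (fst (a i))}. sg (a i) * sg (star (a i)) *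
     ((if fst (a i) = x \<and> fst (star (a i)) = y then 1 else 0) - (if fst (a i) = y \<and> fst (star (a i)) = x then 1 else 0)))"
  unfolding Qform_def
  unfolding sum_component by (rule sum.cong[OF refl]) (simp only: wedge_def vec_lambda_beta cls_comp term_aux)

lemma sg_sq: "sg u * sg u = 1" by (simp add: sg_def)

lemma disj:
  fixes a :: "nat \<Rightarrow> 'v::finite \<times> bool"
  assumes card: "CARD('v) = 2 * g"
    and cover: "(fst \<circ> a) ` {..<g} \<union> (fst \<circ> star \<circ> a) ` {..<g} = UNIV"
  shows "inj_on (fst \<circ> a) {..<g}" "inj_on (fst \<circ> star \<circ> a) {..<g}"
    "(fst \<circ> a) ` {..<g} \<inter> (fst \<circ> star \<circ> a) ` {..<g} = {}"
proof -
  let ?P = "(fst \<circ> a) ` {..<g}" and ?R = "(fst \<circ> star \<circ> a) ` {..<g}"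
  have c1: "card ?P \<le> g" using card_image_le[of "{..<g}" "fst \<circ> a"] by simp
  have c2: "card ?R \<le> g" using card_image_le[of "{..<g}" "fst \<circ> star \<circ> a"] by simp
  have "card (?P \<union> ?R) = 2 * g" using cover card by simp
  moreover have "card (?P \<union> ?R) + card (?P \<inter> ?R) = card ?P + card ?R"
    using card_Un_Int[of ?P ?R] by simp
  ultimately have "card ?P = g" "card ?R = g" "card (?P \<inter> ?R) = 0" using c1 c2 by linarith+
  then show "inj_on (fst \<circ> a) {..<g}" "inj_on (fst \<circ> star \<circ> a) {..<g}" "?P \<inter> ?R = {}"
    using eq_card_imp_inj_on[of "{..<g}" "fst \<circ> a"] eq_card_imp_inj_on[of "{..<g}" "fst \<circ> star \<circ> a"]
      card_0_eq[of "?P \<inter> ?R"] by auto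
qed

lemma cancel_aux: "s = c * t \<Longrightarrow> c * c = 1 \<Longrightarrow> s * c = (t::int)"
proof -
  assume "s = c * t" "c * c = 1"
  then have "s * c = t * (c * c)" by (simp add: mult_ac)
  then show ?thesis using \<open>c * c = 1\<close> by simp
qed

lemma Q_cols:
  fixes a :: "nat \<Rightarrow> 'v::finite \<times> bool" and E :: "'v \<Rightarrow> 'v \<Rightarrow> bool"
    and star :: "'v \<times> bool \<Rightarrow> 'v \<times> bool" and g :: nat
  defines "I \<equiv> {i. i < g \<and> E (fst (star (a i))) (fst (a i))}"
  assumes ip: "inj_on (fst \<circ> a) {..<g}" and iq: "inj_on (fst \<circ> star \<circ> a) {..<g}"
    and dj: "(fst \<circ> a) ` {..<g} \<inter> (fst \<circ> star \<circ> a) ` {..<g} = {}"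
    and i0: "i0 \<in> I"
  shows "Qform E star a g *v axis (fst (star (a i0))) (sg (a i0) * sg (star (a i0))) = axis (fst (a i0)) 1"
    "Qform E star a g *v axis (fst (a i0)) (- sg (a i0) * sg (star (a i0))) = axis (fst (star (a i0))) 1"
proof -
  have fin: "finite I" unfolding I_def by simp
  have Ig: "\<And>i. i \<in> I \<Longrightarrow> i < g" unfolding I_def by simp
  have pp: "\<And>i. i \<in> I \<Longrightarrow> fst (a i) = fst (a i0) \<Longrightarrow> i = i0"
    using ip Ig i0 unfolding inj_on_def by auto
  have qq: "\<And>i. i \<in> I \<Longrightarrow> fst (star (a i)) = fst (star (a i0)) \<Longrightarrow> i = i0"
    using iq Ig i0 unfolding inj_on_def by auto
  have pq: "\<And>i j. i \<in> I \<Longrightarrow> j \<in> I \<Longrightarrow> fst (a i) \<noteq> fst (star (a j))"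
    using dj Ig by fastforce
  show "Qform E star a g *v axis (fst (star (a i0))) (sg (a i0) * sg (star (a i0))) = axis (fst (a i0)) 1"
  proof (subst vec_eq_iff, intro allI)
    fix x
    let ?f = "\<lambda>i. sg (a i) * sg (star (a i)) *
     ((if fst (a i) = x \<and> fst (star (a i)) = fst (star (a i0)) then 1 else 0) - (if fst (a i) = fst (star (a i0)) \<and> fst (star (a i)) = x then 1 else 0))"
    have "sum ?f I = ?f i0 + sum ?f (I - {i0})" using fin i0 by (simp add: sum.remove)
    moreover have "sum ?f (I - {i0}) = 0"
      proof (rule sum.neutral, intro ballI)
      fix i assume i: "i \<in> I - {i0}"
      then have "fst (star (a i)) \<noteq> fst (star (a i0))" "fst (a i) \<noteq> fst (star (a i0))" using qq pq[OF _ i0] by auto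
      then show "?f i = 0" by simp
    qed
    moreover have "?f i0 = sg (a i0) * sg (star (a i0)) * (if fst (a i0) = x then 1 else 0)"
      using pq[OF i0 i0] by simp
    ultimately have "sum ?f I = sg (a i0) * sg (star (a i0)) * (if fst (a i0) = x then 1 else 0)" by simp
    moreover have cc: "sg (a i0) * sg (star (a i0)) * (sg (a i0) * sg (star (a i0))) = 1" by (simp add: sg_def)
    ultimately have "sum ?f I * (sg (a i0) * sg (star (a i0))) = (if fst (a i0) = x then 1 else 0)"
      by (rule cancel_aux)
    then show "(Qform E star a g *v axis (fst (star (a i0))) (sg (a i0) * sg (star (a i0)))) $ x = axis (fst (a i0)) 1 $ x"
      unfolding mv_axis Q_entry I_def[symmetric] axis_comp by (simp add: eq_commute)
  qed
  show "Qform E star a g *v axis (fst (a i0)) (- sg (a i0) * sg (star (a i0))) = axis (fst (star (a i0))) 1"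
  proof (subst vec_eq_iff, intro allI)
    fix x
    let ?f = "\<lambda>i. sg (a i) * sg (star (a i)) *
     ((if fst (a i) = x \<and> fst (star (a i)) = fst (a i0) then 1 else 0) - (if fst (a i) = fst (a i0) \<and> fst (star (a i)) = x then 1 else 0))"
    have "sum ?f I = ?f i0 + sum ?f (I - {i0})" using fin i0 by (simp add: sum.remove)
    moreover have "sum ?f (I - {i0}) = 0"
      proof (rule sum.neutral, intro ballI)
      fix i assume i: "i \<in> I - {i0}"
      then have "fst (a i) \<noteq> fst (a i0)" "fst (star (a i)) \<noteq> fst (a i0)" using pp[of i] pq[OF i0, of i] by auto
      then show "?f i = 0" by simp
    qed
    moreover have "?f i0 = - sg (a i0) * sg (star (a i0)) * (if fst (star (a i0)) = x then 1 else 0)"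
      using pq[OF i0 i0] by simp
    ultimately have "sum ?f I = - sg (a i0) * sg (star (a i0)) * (if fst (star (a i0)) = x then 1 else 0)" by simp
    moreover have cc: "- sg (a i0) * sg (star (a i0)) * (- sg (a i0) * sg (star (a i0))) = 1" by (simp add: sg_def)
    ultimately have "sum ?f I * (- sg (a i0) * sg (star (a i0))) = (if fst (star (a i0)) = x then 1 else 0)"
      by (rule cancel_aux)
    then show "(Qform E star a g *v axis (fst (a i0)) (- sg (a i0) * sg (star (a i0)))) $ x = axis (fst (star (a i0))) 1 $ x"
      unfolding mv_axis Q_entry I_def[symmetric] axis_comp by (simp add: eq_commute)
  qed
qed

lemma supp_in:
  assumes "b \<in> supp2 (Qform E star a g)"
  shows "\<exists>i. i < g \<and> E (fst (star (a i))) (fst (a i)) \<and> (fst (a i) = b \<or> fst (star (a i)) = b)"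
proof (rule ccontr)
  assume n: "\<not> ?thesis"
  from assms obtain y where "Qform E star a g $ b $ y \<noteq> 0" unfolding supp2_def by auto
  moreover have "Qform E star a g $ b $ y = 0"
    unfolding Q_entry by (rule sum.neutral, intro ballI) (use n in simp)
  ultimately show False by simp
qed


lemma mm_entry: "((M::int^'v::finite^'v) ** N) $ i $ j = (\<Sum>k\<in>UNIV. M$i$k * N$k$j)"
  by (simp add: matrix_matrix_mult_def)

lemma elem_inv1: "a \<noteq> b \<Longrightarrow> elemE_inv a b ** elemE a b = (mat 1 :: int^'v::finite^'v)"
proof -
  assume ab: "a \<noteq> b"
  show ?thesis
  proof (subst vec_eq_iff, intro allI, subst vec_eq_iff, intro allI)
    fix i j :: 'v
    have "(elemE_inv a b ** elemE a b) $ i $ j = (\<Sum>k\<in>UNIV. ((if i = k then 1 else 0) - (if i = a \<and> k = b then 1 else 0)) * ((if k = j then 1 else 0) + (if k = a \<and> j = b then 1 else 0)))"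
      by (simp add: mm_entry elemE_def elemE_inv_def)
    also have "\<dots> = (\<Sum>k\<in>UNIV. (if i = k then (if k = j then 1 else 0) + (if k = a \<and> j = b then 1 else 0) else 0)) - (\<Sum>k\<in>UNIV. (if k = b then (if i = a then (if k = j then 1 else 0) + (if k = a \<and> j = b then 1 else 0) else 0) else 0))"
      by (simp only: sum_subtractf[symmetric]) (rule sum.cong; auto)
    also have "\<dots> = mat 1 $ i $ j"
      using ab by (simp add: sum.delta mat_def)
    finally show "(elemE_inv a b ** elemE a b) $ i $ j = mat 1 $ i $ j" .
  qed
qed

lemma elem_inv2: "a \<noteq> b \<Longrightarrow> elemE a b ** elemE_inv a b = (mat 1 :: int^'v::finite^'v)"
proof -
  assume ab: "a \<noteq> b"
  show ?thesis
  proof (subst vec_eq_iff, intro allI, subst vec_eq_iff, intro allI)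
    fix i j :: 'v
    have "(elemE a b ** elemE_inv a b) $ i $ j = (\<Sum>k\<in>UNIV. ((if i = k then 1 else 0) + (if i = a \<and> k = b then 1 else 0)) * ((if k = j then 1 else 0) - (if k = a \<and> j = b then 1 else 0)))"
      by (simp add: mm_entry elemE_def elemE_inv_def)
    also have "\<dots> = (\<Sum>k\<in>UNIV. (if i = k then (if k = j then 1 else 0) - (if k = a \<and> j = b then 1 else 0) else 0)) + (\<Sum>k\<in>UNIV. (if k = b then (if i = a then (if k = j then 1 else 0) - (if k = a \<and> j = b then 1 else 0) else 0) else 0))"
      by (simp only: sum.distrib[symmetric]) (rule sum.cong; auto)
    also have "\<dots> = mat 1 $ i $ j"
      using ab by (simp add: sum.delta mat_def)
    finally show "(elemE a b ** elemE_inv a b) $ i $ j = mat 1 $ i $ j" .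
  qed
qed

lemma negN2: "negN b ** negN b = (mat 1 :: int^'v::finite^'v)"
proof (subst vec_eq_iff, intro allI, subst vec_eq_iff, intro allI)
  fix i j :: 'v
  have "(negN b ** negN b) $ i $ j = (\<Sum>k\<in>UNIV. if i = k then (if i = b then -1 else 1) * (if k = j then (if k = b then -1 else 1) else 0) else 0)"
    unfolding mm_entry negN_def vec_lambda_beta by (rule sum.cong; auto)
  also have "\<dots> = mat 1 $ i $ j" by (simp add: sum.delta mat_def)
  finally show "(negN b ** negN b) $ i $ j = mat 1 $ i $ j" .
qed

lemma genG_linv: "A \<in> genG E S \<Longrightarrow> \<exists>B. B ** A = mat 1"
proof (induction rule: genG.induct)
  case one then show ?case by (intro exI[of _ "mat 1"]) simp
next
  case (E A b a)
  then obtain B where "B ** A = mat 1" by blast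
  then have "(B ** elemE_inv a b) ** (elemE a b ** A) = mat 1"
    using elem_inv1[OF E(4)] by (metis matrix_mul_assoc matrix_mul_lid)
  then show ?case by blast
next
  case (Einv A b a)
  then obtain B where "B ** A = mat 1" by blast
  then have "(B ** elemE a b) ** (elemE_inv a b ** A) = mat 1"
    using elem_inv2[OF Einv(4)] by (metis matrix_mul_assoc matrix_mul_lid)
  then show ?case by blast
next
  case (N A b)
  then obtain B where "B ** A = mat 1" by blast
  then have "(B ** negN b) ** (negN b ** A) = mat 1"
    using negN2 by (metis matrix_mul_assoc matrix_mul_lid)
  then show ?case by blast
qed

lemma zspan_smult_nat: "u \<in> zspan S \<Longrightarrow> (int n) *s u \<in> zspan S"
proof (induction n)
  case 0
  have "int 0 *s u = 0" by (simp add: vec_eq_iff)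
  then show ?case using zspan.zero by metis
next
  case (Suc n)
  have "int (Suc n) *s u = int n *s u + u" by (simp add: vec_eq_iff algebra_simps)
  then show ?case using Suc zspan.add by metis
qed

lemma zspan_smult:
  assumes u: "u \<in> zspan S" shows "(k::int) *s u \<in> zspan S"
proof (cases "k \<ge> 0")
  case True
  then show ?thesis using zspan_smult_nat[OF u, of "nat k"] by simp
next
  case False
  have "k *s u = - (int (nat (-k)) *s u)" using False by (simp add: vec_eq_iff)
  then show ?thesis using zspan.neg[OF zspan_smult_nat[OF u]] by metis
qed

lemma zspan_sum: "finite I \<Longrightarrow> (\<And>i. i \<in> I \<Longrightarrow> f i \<in> zspan S) \<Longrightarrow> sum f I \<in> zspan S"
  by (induction I rule: finite_induct) (auto intro: zspan.intros)

lemma support_zspan: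
  fixes v :: "int ^ 'v::finite"
  assumes "\<And>x. x \<notin> S \<Longrightarrow> v $ x = 0"
  shows "v \<in> zspan S"
proof -
  have "v = (\<Sum>x\<in>UNIV. v $ x *s axis x 1)"
  proof (subst vec_eq_iff, intro allI)
    fix i
    have "(\<Sum>x\<in>UNIV. v $ x *s axis x 1) $ i = (\<Sum>x\<in>UNIV. if i = x then v $ x else 0)"
      unfolding sum_component by (rule sum.cong) (auto simp: axis_comp)
    then show "v $ i = (\<Sum>x\<in>UNIV. v $ x *s axis x 1) $ i" by simp
  qed
  moreover have "(\<Sum>x\<in>UNIV. v $ x *s axis x 1) \<in> zspan S"
  proof (rule zspan_sum)
    fix x
    show "v $ x *s axis x 1 \<in> zspan S"
    proof (cases "x \<in> S")
      case True then show ?thesis by (intro zspan_smult zspan.gen)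
    next
      case False then have "v $ x *s axis x (1::int) = 0" using assms by (simp add: vec_eq_iff)
      then show ?thesis using zspan.zero by metis
    qed
  qed simp
  ultimately show ?thesis by simp
qed

theorem lemma4p5:
  fixes E :: "'v::finite \<Rightarrow> 'v \<Rightarrow> bool"
    and star :: "'v \<times> bool \<Rightarrow> 'v \<times> bool"
    and a :: "nat \<Rightarrow> 'v \<times> bool"
    and g :: nat
    and A0 :: "int ^ 'v ^ 'v"
  assumes sym: "\<forall>x y. E x y \<longrightarrow> E y x"
    and irrefl: "\<forall>x. \<not> E x x"
    and card: "CARD('v) = 2 * g"
    and star_bij: "bij star"
    and star_star: "\<forall>u. star (star u) = letter_inv u"
    and cover: "(fst \<circ> a) ` {..<g} \<union> (fst \<circ> star \<circ> a) ` {..<g} = UNIV"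
    and Q_nz: "Qform E star a g \<noteq> 0"
    and A0_G: "A0 \<in> genG E (supp2 (Qform E star a g))"
    and fixQ: "act2 A0 (Qform E star a g) = Qform E star a g"
  shows "(\<lambda>h. A0 *v h) ` zspan (supp2 (Qform E star a g)) = zspan (supp2 (Qform E star a g))"
proof -
  define Q where "Q = Qform E star a g"
  define S where "S = supp2 Q"
  define R where "R = range (\<lambda>w. Q *v w)"
  have fix': "A0 ** Q ** transpose A0 = Q" using fixQ unfolding act2_def Q_def .
  obtain B where B: "B ** A0 = mat 1" using genG_linv[OF A0_G] by blast
  have R_sub: "R \<subseteq> zspan S"
  proof
    fix v assume "v \<in> R"
    then obtain w where v: "v = Q *v w" unfolding R_def by blast
    show "v \<in> zspan S"
    proof (rule support_zspan)
      fix x assume "x \<notin> S"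
      then have "\<And>y. Q $ x $ y = 0" unfolding S_def supp2_def by auto
      then show "v $ x = 0" unfolding v by (simp add: matrix_vector_mult_def)
    qed
  qed
  have R_add: "u + v \<in> R" if "u \<in> R" "v \<in> R" for u v
  proof -
    from that obtain w1 w2 where "u = Q *v w1" "v = Q *v w2" unfolding R_def by blast
    then have "u + v = Q *v (w1 + w2)" by (simp add: matrix_vector_right_distrib)
    then show ?thesis unfolding R_def by blast
  qed
  have R_neg: "- u \<in> R" if "u \<in> R" for u
  proof -
    from that obtain w1 where "u = Q *v w1" unfolding R_def by blast
    then have "- u = Q *v (- w1)" by (simp add: vec_eq_iff matrix_vector_mult_def sum_negf)
    then show ?thesis unfolding R_def by blast
  qed
  have dj: "inj_on (fst \<circ> a) {..<g}" "inj_on (fst \<circ> star \<circ> a) {..<g}"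
    "(fst \<circ> a) ` {..<g} \<inter> (fst \<circ> star \<circ> a) ` {..<g} = {}"
    using disj[OF card cover] by auto
  have gen_R: "axis b 1 \<in> R" if bS: "b \<in> S" for b
  proof -
    obtain i where i: "i < g" "E (fst (star (a i))) (fst (a i))" "fst (a i) = b \<or> fst (star (a i)) = b"
      using supp_in[of b E star a g] bS unfolding S_def Q_def by blast
    then have iI: "i \<in> {i. i < g \<and> E (fst (star (a i))) (fst (a i))}" by simp
    note c = Q_cols[OF dj iI]
    from i(3) show ?thesis
    proof
      assume "fst (a i) = b"
      then show ?thesis using c(1) unfolding R_def Q_def by (metis rangeI)
    next
      assume "fst (star (a i)) = b"
      then show ?thesis using c(2) unfolding R_def Q_def by (metis rangeI)
    qed
  qed
  have zR: "zspan S \<subseteq> R"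
  proof
    fix v assume "v \<in> zspan S"
    then show "v \<in> R"
    proof (induction rule: zspan.induct)
      case zero
      have "(0::int^'v) = Q *v 0" by simp
      then show ?case unfolding R_def by blast
    next
      case (gen b) then show ?case using gen_R by blast
    next
      case (add u v) then show ?case using R_add by blast
    next
      case (neg u) then show ?case using R_neg by blast
    qed
  qed
  have ZR: "zspan S = R" using zR R_sub by blast
  have "(\<lambda>h. A0 *v h) ` R = R"
  proof
    show "(\<lambda>h. A0 *v h) ` R \<subseteq> R"
    proof
      fix v assume "v \<in> (\<lambda>h. A0 *v h) ` R"
      then obtain w where v: "v = A0 *v (Q *v w)" unfolding R_def by blast
      have tt: "transpose A0 ** transpose B = mat 1"
        using B by (metis matrix_transpose_mul transpose_mat)
      have "(A0 ** Q ** transpose A0) *v (transpose B *v w) = (A0 ** Q) *v (transpose A0 *v (transpose B *v w))"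
        by (simp only: matrix_vector_mul_assoc matrix_mul_assoc)
      also have "\<dots> = (A0 ** Q) *v w" by (simp only: matrix_vector_mul_assoc tt matrix_vector_mul_lid)
      also have "\<dots> = v" unfolding v by (simp only: matrix_vector_mul_assoc)
      finally have "v = (A0 ** Q ** transpose A0) *v (transpose B *v w)" by simp
      then have "v = Q *v (transpose B *v w)" using fix' by simp
      then show "v \<in> R" unfolding R_def by blast
    qed
    show "R \<subseteq> (\<lambda>h. A0 *v h) ` R"
    proof
      fix v assume "v \<in> R"
      then obtain w where v: "v = Q *v w" unfolding R_def by blast
      have "v = (A0 ** Q ** transpose A0) *v w" using fix' v by simp
      also have "\<dots> = A0 *v (Q *v (transpose A0 *v w))"
        by (simp only: matrix_vector_mul_assoc matrix_mul_assoc)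
      finally show "v \<in> (\<lambda>h. A0 *v h) ` R" unfolding R_def by blast
    qed
  qed
  then show ?thesis using ZR unfolding S_def Q_def by simp
qed

end
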